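(* In the scaled CDN routing model described in the context, let $\mathcal{J}_s^c$ be the long-run throughput of the static policy $\pi^s$ in the scaled system with scaling factor $c\ge1$, and let $\mathcal{J}_{ub}^c=\max\sum_{i=1}^m\min\big(\lambda_i^c(0),\mu_i^c\big)$ be the throughput upper bound defined there. Then $$\lim_{c\to\infty}\frac{1}{c}\mathcal{J}_s^c=\lim_{c\to\infty}\frac1c\mathcal{J}_{ub}^c .$$
   Context: A CDN has $m$ surrogate servers $S_1,\dots,S_m$ at fixed points $x_1,\dots,x_m$ of a planar network region $G$ of area $\mathcal{A}$; $|B|$ denotes the area of $B\subseteq G$. In the scaled system with scaling factor $c\ge1$, requests arrive as a Poisson process of total rate $\lambda^c=c\lambda$ with locations i.i.d. uniform on $G$ (so requests from $B\subseteq G$ arrive at rate $c\lambda|B|/\mathcal{A}$); server $S_i$ serves its requests first-come-first-served with exponential service times of rate $\mu_i^c=c\mu_i$ and unlimited queue; $\mathcal{A}$ and a latency bound $\psi>0$ are fixed independent of $c$. The system starts empty. If $n_i(t)$ requests are at $S_i$ at time $t$, let $A_i(t)=\{x\in G:\|x-x_i\|\le \psi-(n_i(t)+1)/(c\mu_i)\}$ (empty if the radius is negative); a request arriving at time $t$ from location $x$ can be served by $S_i$ within latency $\psi$ iff $x\in A_i(t)$. A routing policy sends each arriving request either to some $S_i$ with $x\in A_i(t)$ or to no surrogate server; throughput is the long-run average rate of requests served by surrogate servers. Let $D_i^c=\{x\in G:\|x-x_i\|\le\psi-1/(c\mu_i)\}$ (the region $A_i$ when $S_i$ is empty). An allocation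 is a family of pairwise disjoint measurable sets $R_1,\dots,R_m$ with $R_i\subseteq D_i^c$ (equivalently, a division of each exclusive and common region of the discs $D_i^c$ among the servers whose disc contains it), and $\lambda_i^c(0)=c\lambda|R_i|/\mathcal{A}$. $\mathcal{J}_{ub}^c$ is the maximum of $\sum_{i=1}^m\min(\lambda_i^c(0),\mu_i^c)$ over all allocations. The static policy $\pi^s$ fixes an allocation $R_1^c,\dots,R_m^c$ attaining this maximum; a request arriving at time $t$ from $x\in R_i^c$ is sent to $S_i$ if $x\in A_i(t)$ and otherwise is not served by a surrogate server; requests from outside $\bigcup_i R_i^c$ are not served by a surrogate server. *)

theory Defs
  imports "HOL-Analysis.Analysis"
begin

definition area :: "(real^2) set \<Rightarrow> real" where
  "area B = measure lebesgue B"

text \<open>Region A_i when server S_i holds n requests (scaled system with factor c).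
  A cball-like set with negative radius is empty automatically.\<close>
definition admit_region ::
  "(real^2) set \<Rightarrow> real^2 \<Rightarrow> real \<Rightarrow> real \<Rightarrow> real \<Rightarrow> nat \<Rightarrow> (real^2) set" where
  "admit_region G x psi c mu n = {y \<in> G. norm (y - x) \<le> psi - (real n + 1) / (c * mu)}"

definition disc_D :: "(real^2) set \<Rightarrow> real^2 \<Rightarrow> real \<Rightarrow> real \<Rightarrow> real \<Rightarrow> (real^2) set" where
  "disc_D G x psi c mu = {y \<in> G. norm (y - x) \<le> psi - 1 / (c * mu)}"

definition allocation ::
  "nat \<Rightarrow> (real^2) set \<Rightarrow> (nat \<Rightarrow> real^2) \<Rightarrow> real \<Rightarrow> real \<Rightarrow> (nat \<Rightarrow> real)
     \<Rightarrow> (nat \<Rightarrow> (real^2) set) \<Rightarrow> bool" where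
  "allocation m G xs psi c mu R \<longleftrightarrow>
     (\<forall>i<m. R i \<in> sets lebesgue \<and> R i \<subseteq> disc_D G (xs i) psi c (mu i)) \<and>
     (\<forall>i<m. \<forall>j<m. i \<noteq> j \<longrightarrow> R i \<inter> R j = {})"

definition alloc_value ::
  "nat \<Rightarrow> (real^2) set \<Rightarrow> real \<Rightarrow> real \<Rightarrow> (nat \<Rightarrow> real) \<Rightarrow> (nat \<Rightarrow> (real^2) set) \<Rightarrow> real" where
  "alloc_value m G lam c mu R =
     (\<Sum>i<m. min (c * lam * area (R i) / area G) (c * mu i))"

definition J_ub ::
  "nat \<Rightarrow> (real^2) set \<Rightarrow> (nat \<Rightarrow> real^2) \<Rightarrow> real \<Rightarrow> real \<Rightarrow> (nat \<Rightarrow> real) \<Rightarrow> real \<Rightarrow> real" where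
  "J_ub m G xs lam psi mu c =
     Sup {alloc_value m G lam c mu R | R. allocation m G xs psi c mu R}"

text \<open>Under pi^s, server S_i is a birth-death chain on its queue length n:
  admitted-arrival (birth) rate in state n is c*lam*|R_i \<inter> A_i(n)|/|G|,
  service (death) rate is c*mu_i.\<close>
definition birth_rate ::
  "(real^2) set \<Rightarrow> real \<Rightarrow> real \<Rightarrow> real \<Rightarrow> real^2 \<Rightarrow> real \<Rightarrow> (real^2) set \<Rightarrow> nat \<Rightarrow> real" where
  "birth_rate G lam psi c x mu Ri n = c * lam * area (Ri \<inter> admit_region G x psi c mu n) / area G"

definition bd_generator :: "(nat \<Rightarrow> real) \<Rightarrow> real \<Rightarrow> nat \<Rightarrow> nat \<Rightarrow> real" where
  "bd_generator b d i j =
     (if j = Suc i then b i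
      else if i = Suc j then d
      else if i = j then - (b i + (if i = 0 then 0 else d))
      else 0)"

definition stationary :: "(nat \<Rightarrow> nat \<Rightarrow> real) \<Rightarrow> (nat \<Rightarrow> real) \<Rightarrow> bool" where
  "stationary Q p \<longleftrightarrow> (\<forall>n. 0 \<le> p n) \<and> p sums 1 \<and> (\<forall>j. (\<lambda>i. p i * Q i j) sums 0)"

definition bd_throughput :: "(nat \<Rightarrow> real) \<Rightarrow> real \<Rightarrow> real" where
  "bd_throughput b d =
     (\<Sum>n. (SOME p. stationary (bd_generator b d) p) n * b n)"

definition J_static ::
  "nat \<Rightarrow> (real^2) set \<Rightarrow> (nat \<Rightarrow> real^2) \<Rightarrow> real \<Rightarrow> real \<Rightarrow> (nat \<Rightarrow> real) \<Rightarrow> real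
     \<Rightarrow> (nat \<Rightarrow> (real^2) set) \<Rightarrow> real" where
  "J_static m G xs lam psi mu c R =
     (\<Sum>i<m. bd_throughput (birth_rate G lam psi c (xs i) (mu i) (R i)) (c * mu i))"

end

theory Submission
  imports Defs "HOL-Real_Asymp.Real_Asymp"
begin


lemma bd_sums0:
  "(\<lambda>i. p i * bd_generator b d i 0) sums (p 1 * d - p 0 * b 0)"
proof -
  have "(\<lambda>i. p i * bd_generator b d i 0) sums (\<Sum>i\<in>{0,1}. p i * bd_generator b d i 0)"
    by (rule sums_finite) (auto simp: bd_generator_def)
  then show ?thesis by (simp add: bd_generator_def)
qed

lemma bd_sumsS:
  "(\<lambda>i. p i * bd_generator b d i (Suc k)) sums (p k * b k - p (Suc k) * (b (Suc k) + d) + p (Suc (Suc k)) * d)"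
proof -
  have "(\<lambda>i. p i * bd_generator b d i (Suc k)) sums (\<Sum>i\<in>{k, Suc k, Suc (Suc k)}. p i * bd_generator b d i (Suc k))"
    by (rule sums_finite) (auto simp: bd_generator_def)
  then show ?thesis by (simp add: bd_generator_def algebra_simps)
qed

lemma bd_balance_iff:
  "(\<forall>j. (\<lambda>i. p i * bd_generator b d i j) sums 0) \<longleftrightarrow> (\<forall>n. p (Suc n) * d = p n * b n)"
proof
  assume H: "\<forall>j. (\<lambda>i. p i * bd_generator b d i j) sums 0"
  have e0: "p 1 * d - p 0 * b 0 = 0" using sums_unique2[OF bd_sums0 H[rule_format, of 0]] .
  have eS: "p k * b k - p (Suc k) * (b (Suc k) + d) + p (Suc (Suc k)) * d = 0" for k
    using sums_unique2[OF bd_sumsS H[rule_format, of "Suc k"]] .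
  show "\<forall>n. p (Suc n) * d = p n * b n"
  proof
    fix n show "p (Suc n) * d = p n * b n"
    proof (induction n)
      case 0 then show ?case using e0 by simp
    next
      case (Suc n) then show ?case using eS[of n] by (simp add: algebra_simps)
    qed
  qed
next
  assume H: "\<forall>n. p (Suc n) * d = p n * b n"
  show "\<forall>j. (\<lambda>i. p i * bd_generator b d i j) sums 0"
  proof
    fix j show "(\<lambda>i. p i * bd_generator b d i j) sums 0"
    proof (cases j)
      case 0 then show ?thesis using bd_sums0[of p b d] H by simp
    next
      case (Suc k) then show ?thesis using bd_sumsS[of p b d k] H[rule_format, of k] H[rule_format, of "Suc k"]
        by (simp add: algebra_simps)
    qed
  qed
qed


lemma geom_aux:
  fixes r :: real assumes "0 \<le> r" "r \<le> 1"
  shows "1 \<le> (\<Sum>n\<le>N. r ^ n) * (1 - r + 1 / (real N + 1))"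
proof -
  let ?S = "\<Sum>n\<le>N. r ^ n"
  have a: "(1 - r) * ?S = 1 - r ^ Suc N" by (rule sum_gp_basic)
  have "(\<Sum>n\<le>N. r ^ Suc N) \<le> ?S"
    by (rule sum_mono) (use assms in \<open>auto intro!: power_decreasing simp del: power_Suc\<close>)
  then have b: "(real N + 1) * r ^ Suc N \<le> ?S" by (simp add: add.commute)
  have "?S * (1 - r + 1 / (real N + 1)) = (1 - r) * ?S + ?S / (real N + 1)"
    by (simp add: algebra_simps)
  also have "?S / (real N + 1) \<ge> r ^ Suc N" using b by (simp add: field_simps)
  ultimately show ?thesis using a by linarith
qed

lemma bd_exists:
  fixes b :: "nat \<Rightarrow> real"
  assumes d: "d > 0" and b0: "\<forall>n. 0 \<le> b n" and bK: "\<forall>n\<ge>K. b n = 0"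
  shows "\<exists>p. stationary (bd_generator b d) p"
proof -
  define pi where "pi n = (\<Prod>j<n. b j / d)" for n
  define Z where "Z = (\<Sum>n\<le>K. pi n)"
  have pos: "0 \<le> pi n" for n unfolding pi_def using b0 d by (auto intro!: prod_nonneg)
  have z: "pi n = 0" if "n > K" for n unfolding pi_def
    using that bK by (intro prod_zero) auto
  have Z1: "1 \<le> Z" unfolding Z_def
    using member_le_sum[of 0 "{..K}" pi] pos by (simp add: pi_def)
  have db: "pi (Suc n) * d = pi n * b n" for n
    using d by (simp add: pi_def)
  define p where "p n = pi n / Z" for n
  have "stationary (bd_generator b d) p"
    unfolding stationary_def bd_balance_iff
  proof (intro conjI allI)
    show "0 \<le> p n" for n using pos Z1 by (simp add: p_def)
    have "p sums (\<Sum>n\<le>K. p n)" by (rule sums_finite) (auto simp: p_def z)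
    moreover have "(\<Sum>n\<le>K. p n) = 1" using Z1 by (simp add: p_def Z_def sum_divide_distrib[symmetric])
    ultimately show "p sums 1" by simp
    show "p (Suc n) * d = p n * b n" for n using db[of n] by (simp add: p_def field_simps)
  qed
  then show ?thesis by blast
qed

lemma bd_bounds:
  fixes b :: "nat \<Rightarrow> real"
  assumes d: "d > 0" and b0: "\<forall>n. 0 \<le> b n" and bK: "\<forall>n\<ge>K. b n = 0"
  shows "bd_throughput b d \<le> d"
    and "(\<forall>n. b n \<le> B) \<Longrightarrow> bd_throughput b d \<le> B"
    and "0 \<le> rho \<Longrightarrow> (\<forall>j<N. rho * d \<le> b j) \<Longrightarrow> d * (min rho 1 - 1 / (real N + 1)) \<le> bd_throughput b d"
proof -
  define q where "q = (SOME p. stationary (bd_generator b d) p)"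
  have st: "stationary (bd_generator b d) q"
    unfolding q_def using bd_exists[OF assms] by (rule someI_ex)
  have q0: "0 \<le> q n" for n using st by (simp add: stationary_def)
  have q1: "q sums 1" using st by (simp add: stationary_def)
  have db: "q (Suc n) * d = q n * b n" for n using st by (simp add: stationary_def bd_balance_iff)
  have "(\<lambda>n. q (Suc n)) sums (1 - q 0)" using q1 by (simp add: sums_Suc_iff)
  then have "(\<lambda>n. q (Suc n) * d) sums ((1 - q 0) * d)" by (rule sums_mult2)
  then have Ts: "(\<lambda>n. q n * b n) sums ((1 - q 0) * d)" by (simp add: db)
  have T: "bd_throughput b d = (1 - q 0) * d"
    unfolding bd_throughput_def q_def[symmetric] using Ts by (simp add: sums_iff)
  show "bd_throughput b d \<le> d" using T q0[of 0] d by (simp add: algebra_simps) (smt (verit) mult_nonneg_nonneg)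
  show "bd_throughput b d \<le> B" if B: "\<forall>n. b n \<le> B"
  proof -
    have s: "(\<lambda>n. q n * B) sums (1 * B)" using q1 by (rule sums_mult2)
    have "(1 - q 0) * d \<le> 1 * B"
    proof (rule sums_le[OF _ Ts s])
      fix n show "q n * b n \<le> q n * B" using B q0[of n] by (intro mult_left_mono) auto
    qed
    then show ?thesis using T by simp
  qed
  show "d * (min rho 1 - 1 / (real N + 1)) \<le> bd_throughput b d"
    if r0: "0 \<le> rho" and rb: "\<forall>j<N. rho * d \<le> b j"
  proof -
    define pi where "pi n = (\<Prod>j<n. b j / d)" for n
    define r where "r = min rho 1"
    have qpi: "q n = q 0 * pi n" for n
    proof (induction n)
      case 0 then show ?case by (simp add: pi_def)
    next
      case (Suc n)
      have "q (Suc n) = q n * b n / d" using db[of n] d by (simp add: field_simps)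
      then show ?case using Suc by (simp add: pi_def)
    qed
    have pir: "r ^ n \<le> pi n" if "n \<le> N" for n
    proof -
      have "(\<Prod>j<n. r) \<le> (\<Prod>j<n. b j / d)"
      proof (rule prod_mono)
        fix j assume "j \<in> {..<n}"
        then have "rho * d \<le> b j" using rb that by auto
        then have "rho \<le> b j / d" using d by (simp add: field_simps)
        then show "0 \<le> r \<and> r \<le> b j / d" using r0 by (simp add: r_def)
      qed
      then show ?thesis by (simp add: pi_def)
    qed
    define S where "S = (\<Sum>n\<le>N. r ^ n)"
    have S1: "1 \<le> S" unfolding S_def
      using member_le_sum[of 0 "{..N}" "\<lambda>n. r ^ n"] r0 by (simp add: r_def)
    have "(\<Sum>n\<le>N. q n) \<le> 1"
      using sum_le_suminf[of q "{..N}"] q1 q0 by (simp add: sums_iff)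
    moreover have "q 0 * S \<le> (\<Sum>n\<le>N. q n)"
      unfolding S_def sum_distrib_left
    proof (rule sum_mono)
      fix n assume "n \<in> {..N}"
      then have "r ^ n \<le> pi n" using pir by simp
      then have "q 0 * r ^ n \<le> q 0 * pi n" using q0[of 0] by (rule mult_left_mono)
      then show "q 0 * r ^ n \<le> q n" using qpi[of n] by simp
    qed
    ultimately have "q 0 * S \<le> 1" by linarith
    then have "q 0 \<le> 1 / S" using S1 by (simp add: field_simps)
    moreover have "1 \<le> S * (1 - r + 1 / (real N + 1))"
      unfolding S_def by (rule geom_aux) (use r0 in \<open>auto simp: r_def\<close>)
    then have "1 / S \<le> 1 - r + 1 / (real N + 1)" using S1 by (simp add: field_simps)
    ultimately have "r - 1 / (real N + 1) \<le> 1 - q 0" by linarith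
    then show ?thesis using T d unfolding r_def by (simp add: mult_left_mono mult.commute)
  qed
qed


lemma ball_meas:
  fixes x :: "real^2" assumes "r \<ge> 0"
  shows "measure lebesgue (cball x r) = unit_ball_vol 2 * r^2"
    "measure lebesgue (ball x r) = unit_ball_vol 2 * r^2"
  using content_cball[OF assms, of x] content_ball[OF assms, of x] by simp_all

lemma annulus_bound:
  fixes x :: "real^2" and R G :: "(real^2) set"
  assumes psi: "psi > 0" and c: "c > 0" and mu: "mu > 0"
    and RD: "R \<subseteq> disc_D G x psi c mu" and Rm: "R \<in> sets lebesgue"
    and Gm: "G \<in> sets lebesgue" and Gf: "emeasure lebesgue G \<noteq> \<infinity>"
  shows "area R - area (R \<inter> admit_region G x psi c mu n)
           \<le> unit_ball_vol 2 * (2 * psi) * ((real n + 1) / (c * mu))"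
proof -
  define rad where "rad = psi - (real n + 1) / (c * mu)"
  define r where "r = max 0 rad"
  define V where "V = unit_ball_vol 2"
  have A: "admit_region G x psi c mu n = G \<inter> cball x rad"
    by (auto simp: admit_region_def rad_def dist_norm norm_minus_commute)
  have Am: "admit_region G x psi c mu n \<in> sets lebesgue" unfolding A using Gm by auto
  have RG: "R \<subseteq> G" using RD by (auto simp: disc_D_def)
  have Rf: "emeasure lebesgue R \<noteq> \<infinity>"
    using emeasure_mono[OF RG Gm] Gf by (auto simp: top_unique)
  have "area R - area (R \<inter> admit_region G x psi c mu n) = measure lebesgue (R - (R \<inter> admit_region G x psi c mu n))"
    unfolding area_def using Rf Rm Am by (subst measure_Diff) auto
  also have "R - (R \<inter> admit_region G x psi c mu n) \<subseteq> cball x psi - ball x r"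
  proof
    fix y assume y: "y \<in> R - (R \<inter> admit_region G x psi c mu n)"
    then have "y \<in> G" "norm (y - x) \<le> psi - 1 / (c * mu)" using RD by (auto simp: disc_D_def)
    moreover have "psi - 1 / (c * mu) \<le> psi" using c mu by simp
    moreover have "\<not> norm (y - x) \<le> rad" using y \<open>y \<in> G\<close> unfolding A by (auto simp: dist_norm norm_minus_commute)
    ultimately have "norm (y - x) \<le> psi" "\<not> norm (y - x) < r" unfolding r_def by (smt (verit) norm_ge_zero)+
    then show "y \<in> cball x psi - ball x r"
      by (auto simp: dist_norm norm_minus_commute)
  qed
  then have "measure lebesgue (R - (R \<inter> admit_region G x psi c mu n)) \<le> measure lebesgue (cball x psi - ball x r)"
    using Rm Am by (intro measure_mono_fmeasurable) (auto intro: fmeasurable_Diff)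
  also have "\<dots> = measure lebesgue (cball x psi) - measure lebesgue (ball x r)"
  proof (rule measure_Diff)
    have "(real n + 1) / (c * mu) \<ge> 0" using c mu by simp
    then have "r \<le> psi" unfolding r_def rad_def using psi by linarith
    then show "ball x r \<subseteq> cball x psi" by auto
    show "emeasure lebesgue (cball x psi) \<noteq> \<infinity>" using emeasure_lborel_cball_finite[of x psi] by simp
  qed auto
  also have "\<dots> = V * (psi - r) * (psi + r)"
    using ball_meas[of psi x] ball_meas[of r x] psi unfolding V_def r_def
    by (simp add: power2_eq_square algebra_simps)
  also have "\<dots> \<le> V * ((real n + 1) / (c * mu)) * (2 * psi)"
  proof (rule mult_mono)
    have "psi - r \<le> (real n + 1) / (c * mu)" unfolding r_def rad_def using psi by auto
    moreover have "psi - r \<ge> 0" unfolding r_def rad_def using psi c mu by auto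
    ultimately show "V * (psi - r) \<le> V * ((real n + 1) / (c * mu))"
      unfolding V_def by (intro mult_left_mono) auto
    show "psi + r \<le> 2 * psi" unfolding r_def rad_def using psi c mu by auto
    show "0 \<le> V * ((real n + 1) / (c * mu))" unfolding V_def using c mu by auto
    show "0 \<le> psi + r" unfolding r_def using psi by auto
  qed
  finally show ?thesis unfolding V_def by (simp add: algebra_simps)
qed


lemma bd_all:
  fixes b :: "nat \<Rightarrow> real"
  assumes "d > 0" "\<forall>n. 0 \<le> b n" "\<forall>n\<ge>K. b n = 0"
  shows "bd_throughput b d \<le> d \<and> ((\<forall>n. b n \<le> B) \<longrightarrow> bd_throughput b d \<le> B) \<and>
        (0 \<le> rho \<longrightarrow> (\<forall>j<N. rho * d \<le> b j) \<longrightarrow> d * (min rho 1 - 1 / (real N + 1)) \<le> bd_throughput b d)"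
  using bd_bounds[OF assms] by blast

lemma server_bounds:
  fixes x :: "real^2" and R G :: "(real^2) set"
  assumes psi: "psi > 0" and c: "c \<ge> 1" and mu: "mu > 0" and lam: "lam > 0"
    and RD: "R \<subseteq> disc_D G x psi c mu" and Rm: "R \<in> sets lebesgue"
    and Gm: "G \<in> sets lebesgue" and Gp: "area G > 0"
    and annulus: "\<And>n. area R - area (R \<inter> admit_region G x psi c mu n)
           \<le> unit_ball_vol 2 * (2 * psi) * ((real n + 1) / (c * mu))"

  defines "a \<equiv> lam * area R / area G"
  defines "T \<equiv> bd_throughput (birth_rate G lam psi c x mu R) (c * mu)"
  shows "T \<le> c * min a mu"
    and "c * (min a mu - (lam * unit_ball_vol 2 * (2 * psi) / (mu * area G) + mu) / sqrt c) \<le> T"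
proof -
  define b where "b = birth_rate G lam psi c x mu R"
  define d where "d = c * mu"
  define V where "V = unit_ball_vol 2"
  have V0: "V \<ge> 0" unfolding V_def by simp
  have c0: "c > 0" using c by simp
  have d0: "d > 0" unfolding d_def using c0 mu by simp
  have RG: "R \<subseteq> G" using RD by (auto simp: disc_D_def)
  have Gf: "emeasure lebesgue G \<noteq> \<infinity>" using Gp by (auto simp: area_def measure_def)
  have Rf: "R \<in> fmeasurable lebesgue"
    using emeasure_mono[OF RG Gm] Gf Rm by (auto simp: top_unique fmeasurable_def less_top)
  have adm_m: "admit_region G x psi c mu n \<in> sets lebesgue" for n
  proof -
    have "admit_region G x psi c mu n = G \<inter> cball x (psi - (real n + 1) / (c * mu))"
      by (auto simp: admit_region_def dist_norm norm_minus_commute)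
    then show ?thesis using Gm by auto
  qed
  have areale: "area (R \<inter> admit_region G x psi c mu n) \<le> area R" for n
    unfolding area_def using Rf adm_m by (intro measure_mono_fmeasurable) auto
  have b0: "\<forall>n. 0 \<le> b n" unfolding b_def birth_rate_def area_def using c0 lam Gp
    by (auto intro!: divide_nonneg_pos mult_nonneg_nonneg)
  define K where "K = nat \<lceil>psi * c * mu\<rceil>"
  have bK: "\<forall>n\<ge>K. b n = 0"
  proof (intro allI impI)
    fix n assume "n \<ge> K"
    then have "real n \<ge> psi * c * mu" unfolding K_def by linarith
    then have "psi * (c * mu) < real n + 1" by (simp add: algebra_simps)
    then have "psi < (real n + 1) / (c * mu)" using c0 mu by (simp add: field_simps)
    then have "admit_region G x psi c mu n = {}"
      unfolding admit_region_def using norm_ge_zero by (smt (verit) Collect_empty_eq)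
    then show "b n = 0" unfolding b_def birth_rate_def by (simp add: area_def)
  qed
  note B = bd_all[OF d0 b0 bK]
  have bup: "\<forall>n. b n \<le> c * a"
  proof
    fix n
    have "c * lam * area (R \<inter> admit_region G x psi c mu n) \<le> c * lam * area R"
      using areale[of n] c0 lam by (intro mult_left_mono) auto
    then show "b n \<le> c * a" unfolding b_def birth_rate_def a_def using Gp
      by (simp add: divide_right_mono)
  qed
  have t1: "T \<le> c * mu" "T \<le> c * a"
    using B[where B="c * a"] bup unfolding T_def b_def[symmetric] d_def[symmetric] by (auto simp: d_def)
  show "T \<le> c * min a mu" using t1 by (simp add: min_def)
  define s where "s = sqrt c"
  have s1: "s \<ge> 1" unfolding s_def using c by simp
  have ss: "s * s = c" unfolding s_def using c by simp
  define N where "N = nat \<lfloor>s\<rfloor>"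
  have Ns: "real N \<le> s" "s \<le> real N + 1" unfolding N_def using s1 by linarith+
  define K1 where "K1 = lam * V * (2 * psi) / (mu * area G)"
  have K10: "K1 \<ge> 0" unfolding K1_def using lam V0 psi mu Gp by simp
  define dl where "dl = K1 * real N / c"
  have dl_le: "dl \<le> K1 / s"
  proof -
    have "s * real N \<le> s * s" using Ns s1 by (intro mult_left_mono) auto
    then have "real N / c \<le> 1 / s" using s1 ss c0 by (simp add: field_simps)
    then show ?thesis unfolding dl_def using K10 by (metis mult_left_mono times_divide_eq_right mult_1_right)
  qed
  have blow: "\<forall>j<N. c * (a - dl) \<le> b j"
  proof (intro allI impI)
    fix j assume j: "j < N"
    have "area R - area (R \<inter> admit_region G x psi c mu j) \<le> V * (2 * psi) * ((real j + 1) / (c * mu))"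
      using annulus[of j] by (simp add: V_def)
    also have "\<dots> \<le> V * (2 * psi) * (real N / (c * mu))"
      using j V0 psi c0 mu by (intro mult_left_mono divide_right_mono) auto
    finally have h: "area R - V * (2 * psi) * (real N / (c * mu)) \<le> area (R \<inter> admit_region G x psi c mu j)" by simp
    have "a - dl = lam * (area R - V * (2 * psi) * (real N / (c * mu))) / area G"
      unfolding a_def dl_def K1_def using c0 mu Gp by (simp add: field_simps)
    also have "\<dots> \<le> lam * area (R \<inter> admit_region G x psi c mu j) / area G"
      using h lam Gp by (intro divide_right_mono mult_left_mono) auto
    finally show "c * (a - dl) \<le> b j" unfolding b_def birth_rate_def using c0
      by (metis mult_left_mono less_imp_le times_divide_eq_right mult.assoc)
  qed
  define rho where "rho = max 0 (a - dl) / mu"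
  have rho0: "0 \<le> rho" unfolding rho_def using mu by simp
  have rhob: "\<forall>j<N. rho * d \<le> b j"
    using blow b0 unfolding rho_def d_def using mu by (auto simp: max_def mult.commute)
  have low: "d * (min rho 1 - 1 / (real N + 1)) \<le> T"
    using B rho0 rhob unfolding T_def b_def d_def by blast
  have e1: "d * (min rho 1 - 1 / (real N + 1)) = c * (min (max 0 (a - dl)) mu - mu / (real N + 1))"
    unfolding d_def rho_def using mu c0 by (simp add: min_def field_simps)
  have e2: "min (max 0 (a - dl)) mu \<ge> min a mu - dl"
  proof -
    have "dl \<ge> 0" unfolding dl_def using K10 c0 by simp
    then show ?thesis using mu by (simp add: min_def max_def)
  qed
  have e3: "mu / (real N + 1) \<le> mu / s" using Ns s1 mu by (intro divide_left_mono) auto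
  have "min a mu - (K1 / s + mu / s) \<le> min (max 0 (a - dl)) mu - mu / (real N + 1)"
    using e2 e3 dl_le by linarith
  then have "c * (min a mu - (K1 / s + mu / s)) \<le> d * (min rho 1 - 1 / (real N + 1))"
    unfolding e1 using c0 by (intro mult_left_mono) auto
  then show "c * (min a mu - (lam * unit_ball_vol 2 * (2 * psi) / (mu * area G) + mu) / sqrt c) \<le> T"
    using low unfolding K1_def V_def s_def by (simp add: add_divide_distrib)
qed


lemma av_eq:
  assumes "c > 0"
  shows "alloc_value m G lam c mu Rx = c * (\<Sum>i<m. min (lam * area (Rx i) / area G) (mu i))"
  unfolding alloc_value_def sum_distrib_left
  by (rule sum.cong) (use assms in \<open>auto simp: min_mult_distrib_left\<close>)

lemma main_part:
  fixes m :: nat and G :: "(real^2) set" and xs :: "nat \<Rightarrow> real^2"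
    and lam psi :: real and mu :: "nat \<Rightarrow> real"
    and R :: "real \<Rightarrow> nat \<Rightarrow> (real^2) set"
  assumes Gp: "0 < area G"
    and lam: "lam > 0" and psi: "psi > 0" and mu: "\<forall>i<m. mu i > 0"
    and H: "\<forall>c\<ge>1. allocation m G xs psi c mu (R c) \<and>
                 alloc_value m G lam c mu (R c) = J_ub m G xs lam psi mu c"
    and SB: "\<And>c i. c \<ge> 1 \<Longrightarrow> i < m \<Longrightarrow>
       bd_throughput (birth_rate G lam psi c (xs i) (mu i) (R c i)) (c * mu i) \<le> c * min (lam * area (R c i) / area G) (mu i) \<and>
       c * (min (lam * area (R c i) / area G) (mu i) - (lam * unit_ball_vol 2 * (2 * psi) / (mu i * area G) + mu i) / sqrt c)
         \<le> bd_throughput (birth_rate G lam psi c (xs i) (mu i) (R c i)) (c * mu i)"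
  shows "\<exists>L. ((\<lambda>c. J_static m G xs lam psi mu c (R c) / c) \<longlongrightarrow> L) at_top \<and>
             ((\<lambda>c. J_ub m G xs lam psi mu c / c) \<longlongrightarrow> L) at_top"
proof -
  define g where "g c = (\<Sum>i<m. min (lam * area (R c i) / area G) (mu i))" for c
  define E where "E = (\<Sum>i<m. (lam * unit_ball_vol 2 * (2 * psi) / (mu i * area G) + mu i))"
  define M where "M = (\<Sum>i<m. mu i)"
  have hg: "J_ub m G xs lam psi mu c / c = g c" if "c \<ge> 1" for c
    using H that av_eq[of c m G lam mu "R c"] by (simp add: g_def)
  have gM: "g c \<le> M" for c unfolding g_def M_def by (rule sum_mono) simp
  have mono: "g c \<le> g c'" if c: "1 \<le> c" "c \<le> c'" for c c'
  proof -
    have c0: "c > 0" "c' > 0" using c by auto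
    have "allocation m G xs psi c' mu (R c)"
    proof -
      have "disc_D G (xs i) psi c (mu i) \<subseteq> disc_D G (xs i) psi c' (mu i)" if "i < m" for i
      proof -
        have "1 / (c' * mu i) \<le> 1 / (c * mu i)"
          using c0 mu that c by (intro divide_left_mono mult_right_mono mult_pos_pos) auto
        then show ?thesis unfolding disc_D_def by auto
      qed
      then show ?thesis using H c unfolding allocation_def by blast
    qed
    then have mem: "alloc_value m G lam c' mu (R c) \<in> {alloc_value m G lam c' mu R | R. allocation m G xs psi c' mu R}"
      by blast
    have bdd: "bdd_above {alloc_value m G lam c' mu R | R. allocation m G xs psi c' mu R}"
    proof (rule bdd_aboveI)
      fix x assume "x \<in> {alloc_value m G lam c' mu R | R. allocation m G xs psi c' mu R}"
      then obtain Rx where "x = alloc_value m G lam c' mu Rx" by blast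
      then show "x \<le> c' * M" unfolding M_def sum_distrib_left alloc_value_def
        by (auto intro!: sum_mono)
    qed
    have "alloc_value m G lam c' mu (R c) \<le> J_ub m G xs lam psi mu c'"
      unfolding J_ub_def by (rule cSup_upper[OF mem bdd])
    also have "\<dots> = c' * g c'" using hg[of c'] c c0 by (simp add: field_simps)
    finally have "c' * g c \<le> c' * g c'" using av_eq[of c' m G lam mu "R c"] c0 by (simp add: g_def)
    then show ?thesis using c0 by simp
  qed
  define L where "L = Sup (g ` {1..})"
  have ne: "g ` {1..} \<noteq> {}" by auto
  have bdd: "bdd_above (g ` {1..})" using gM by (intro bdd_aboveI[of _ M]) auto
  have gL: "(g \<longlongrightarrow> L) at_top"
  proof (rule order_tendstoI)
    fix y assume "y < L"
    then obtain c0 where c0: "c0 \<ge> 1" "y < g c0" using less_cSup_iff[OF ne bdd] unfolding L_def by auto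
    show "eventually (\<lambda>c. y < g c) at_top"
      using eventually_ge_at_top[of c0] by eventually_elim (use c0 mono in force)
  next
    fix y assume "L < y"
    show "eventually (\<lambda>c. g c < y) at_top"
      using eventually_ge_at_top[of 1] 
    proof eventually_elim
      case (elim c)
      then have "g c \<le> L" unfolding L_def by (intro cSup_upper bdd) auto
      then show ?case using \<open>L < y\<close> by simp
    qed
  qed
  have ub: "((\<lambda>c. J_ub m G xs lam psi mu c / c) \<longlongrightarrow> L) at_top"
    using gL by (rule Lim_transform_eventually)
      (use eventually_ge_at_top[of 1] in \<open>eventually_elim, simp add: hg\<close>)
  have bnds: "g c - E / sqrt c \<le> J_static m G xs lam psi mu c (R c) / c \<and>
              J_static m G xs lam psi mu c (R c) / c \<le> g c" if c: "c \<ge> 1" for c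
  proof -
    have c0: "c > 0" using c by simp
    let ?T = "\<lambda>i. bd_throughput (birth_rate G lam psi c (xs i) (mu i) (R c i)) (c * mu i)"
    have J: "J_static m G xs lam psi mu c (R c) = (\<Sum>i<m. ?T i)" by (simp add: J_static_def)
    have "(\<Sum>i<m. ?T i) \<le> (\<Sum>i<m. c * min (lam * area (R c i) / area G) (mu i))"
      using SB[OF c] by (intro sum_mono) auto
    also have "\<dots> = c * g c" by (simp add: g_def sum_distrib_left)
    finally have u: "(\<Sum>i<m. ?T i) \<le> c * g c" .
    have "c * (g c - E / sqrt c) = (\<Sum>i<m. c * (min (lam * area (R c i) / area G) (mu i) - (lam * unit_ball_vol 2 * (2 * psi) / (mu i * area G) + mu i) / sqrt c))"
      by (simp add: g_def E_def sum_distrib_left sum_subtractf sum_divide_distrib right_diff_distrib)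
    also have "\<dots> \<le> (\<Sum>i<m. ?T i)" using SB[OF c] by (intro sum_mono) auto
    finally have l: "c * (g c - E / sqrt c) \<le> (\<Sum>i<m. ?T i)" .
    show ?thesis unfolding J using u l c0 by (simp add: field_simps)
  qed
  have e0: "((\<lambda>c::real. 1 / sqrt c) \<longlongrightarrow> 0) at_top" by real_asymp
  have "((\<lambda>c. g c - E * (1 / sqrt c)) \<longlongrightarrow> L - E * 0) at_top"
    by (intro tendsto_intros gL e0)
  then have lo: "((\<lambda>c. g c - E / sqrt c) \<longlongrightarrow> L) at_top" by simp
  have st: "((\<lambda>c. J_static m G xs lam psi mu c (R c) / c) \<longlongrightarrow> L) at_top"
  proof (rule tendsto_sandwich[OF _ _ lo gL])
    show "eventually (\<lambda>c. g c - E / sqrt c \<le> J_static m G xs lam psi mu c (R c) / c) at_top"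
      using eventually_ge_at_top[of 1] by eventually_elim (use bnds in blast)
    show "eventually (\<lambda>c. J_static m G xs lam psi mu c (R c) / c \<le> g c) at_top"
      using eventually_ge_at_top[of 1] by eventually_elim (use bnds in blast)
  qed
  show ?thesis using st ub by blast
qed

theorem theorem4:
  fixes m :: nat and G :: "(real^2) set" and xs :: "nat \<Rightarrow> real^2"
    and lam psi :: real and mu :: "nat \<Rightarrow> real"
    and R :: "real \<Rightarrow> nat \<Rightarrow> (real^2) set"
  assumes "m \<ge> 1"
    and "G \<in> sets lebesgue" and "0 < area G"
    and "\<forall>i<m. xs i \<in> G"
    and "lam > 0" and "psi > 0" and "\<forall>i<m. mu i > 0"
    and "\<forall>c\<ge>1. allocation m G xs psi c mu (R c) \<and>
                 alloc_value m G lam c mu (R c) = J_ub m G xs lam psi mu c"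
  shows "\<exists>L. ((\<lambda>c. J_static m G xs lam psi mu c (R c) / c) \<longlongrightarrow> L) at_top \<and>
             ((\<lambda>c. J_ub m G xs lam psi mu c / c) \<longlongrightarrow> L) at_top"
proof (rule main_part[OF assms(3,5,6,7,8)])
  fix c :: real and i assume c: "c \<ge> 1" and i: "i < m"
  have Gf: "emeasure lebesgue G \<noteq> \<infinity>" using assms(3) by (auto simp: area_def measure_def)
  have al: "allocation m G xs psi c mu (R c)" using assms(8) c by blast
  have RD: "R c i \<subseteq> disc_D G (xs i) psi c (mu i)" and Rm: "R c i \<in> sets lebesgue"
    using al i unfolding allocation_def by auto
  have mui: "mu i > 0" using assms(7) i by blast
  have c0: "c > 0" using c by simp
  note ann = annulus_bound[OF assms(6) c0 mui RD Rm assms(2) Gf]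
  note sb = server_bounds[OF assms(6) c mui assms(5) RD Rm assms(2,3) ann]
  show "bd_throughput (birth_rate G lam psi c (xs i) (mu i) (R c i)) (c * mu i) \<le> c * min (lam * area (R c i) / area G) (mu i) \<and>
       c * (min (lam * area (R c i) / area G) (mu i) - (lam * unit_ball_vol 2 * (2 * psi) / (mu i * area G) + mu i) / sqrt c)
         \<le> bd_throughput (birth_rate G lam psi c (xs i) (mu i) (R c i)) (c * mu i)"
    using sb by blast
qed

end
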